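(* Let $I\subset\mathbb R$ be an interval. (i) Let $f:I\to\mathbb R$ be $\mathcal G$-convex, $g\in\mathcal G$, and $t_1<t_2$ in $I$ with $g(t_i)=f(t_i)$ for $i=1,2$. Then $g(t)\ge f(t)$ for all $t\in[t_1,t_2]$ and $g(t)\le f(t)$ for all $t\in I\setminus[t_1,t_2]$. (ii) Let $f:I\to\mathbb R$ be such that for all $t_1<t_2$ in $I$ there is $g\in\mathcal G$ with $g(t_i)=f(t_i)$, $i=1,2$, and $g(t)\ge f(t)$ for all $t\in[t_1,t_2]$. Then the right derivative of $f$ exists on $I\setminus\{\sup I\}$ and the left derivative on $I\setminus\{\inf I\}$; moreover, for every $t_0\in I$ and every $v_0\in\partial^{\pm}f(t_0)$, the function $$s\mapsto\sqrt{f(t_0)^2+2(s-t_0)f(t_0)v_0+(s-t_0)^2}$$ belongs to $\mathcal G$ and is a $\mathcal G$-tangent of $f$ at $t_0$. In particular, $f$ is $\mathcal G$-convex.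
   Context: $\mathcal G:=\{t\mapsto\sqrt{(t-t_0)^2+h^2}:\ t_0\in\mathbb R,\ h\ge0\}$. A function $f:I\to\mathbb R$ is $\mathcal G$-convex if for every $t_0\in I$ there is $g\in\mathcal G$ (called a $\mathcal G$-tangent of $f$ at $t_0$) with $g(t_0)=f(t_0)$ and $g(s)\le f(s)$ for all $s\in I$. With $f^{\oplus}$, $f^{\ominus}$ the right and left derivatives: for $t$ in the interior of $I$, $\partial^{\pm}f(t):=[\min(f^{\ominus}(t),f^{\oplus}(t)),\max(f^{\ominus}(t),f^{\oplus}(t))]$; if $\inf I\in I$ then $\partial^{\pm}f(\inf I):=\{f^{\oplus}(\inf I)\}$; if $\sup I\in I$ then $\partial^{\pm}f(\sup I):=\{f^{\ominus}(\sup I)\}$. *)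

theory Defs
  imports "HOL-Analysis.Analysis"
begin

definition Gfun :: "real \<Rightarrow> real \<Rightarrow> real \<Rightarrow> real" where
  "Gfun t0 h = (\<lambda>t. sqrt ((t - t0)^2 + h^2))"

definition Gclass :: "(real \<Rightarrow> real) set" where
  "Gclass = {Gfun t0 h | t0 h. h \<ge> 0}"

definition G_tangent :: "real set \<Rightarrow> (real \<Rightarrow> real) \<Rightarrow> real \<Rightarrow> (real \<Rightarrow> real) \<Rightarrow> bool" where
  "G_tangent I f t0 g \<longleftrightarrow> g \<in> Gclass \<and> g t0 = f t0 \<and> (\<forall>s\<in>I. g s \<le> f s)"

definition G_convex :: "real set \<Rightarrow> (real \<Rightarrow> real) \<Rightarrow> bool" where
  "G_convex I f \<longleftrightarrow> (\<forall>t0\<in>I. \<exists>g. G_tangent I f t0 g)"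

definition has_rderiv :: "(real \<Rightarrow> real) \<Rightarrow> real set \<Rightarrow> real \<Rightarrow> real \<Rightarrow> bool" where
  "has_rderiv f I t v \<longleftrightarrow> (f has_real_derivative v) (at t within (I \<inter> {t<..}))"

definition has_lderiv :: "(real \<Rightarrow> real) \<Rightarrow> real set \<Rightarrow> real \<Rightarrow> real \<Rightarrow> bool" where
  "has_lderiv f I t v \<longleftrightarrow> (f has_real_derivative v) (at t within (I \<inter> {..<t}))"

definition rderiv :: "(real \<Rightarrow> real) \<Rightarrow> real set \<Rightarrow> real \<Rightarrow> real" where
  "rderiv f I t = (THE v. has_rderiv f I t v)"

definition lderiv :: "(real \<Rightarrow> real) \<Rightarrow> real set \<Rightarrow> real \<Rightarrow> real" where
  "lderiv f I t = (THE v. has_lderiv f I t v)"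

text \<open>The set partial-plus-minus f(t). "t = inf I \<in> I" is expressed as: t \<in> I is a lower bound of I;
  similarly for sup.\<close>
definition pm_subdiff :: "(real \<Rightarrow> real) \<Rightarrow> real set \<Rightarrow> real \<Rightarrow> real set" where
  "pm_subdiff f I t =
     (if (\<forall>s\<in>I. t \<le> s) then {rderiv f I t}
      else if (\<forall>s\<in>I. s \<le> t) then {lderiv f I t}
      else {min (lderiv f I t) (rderiv f I t) .. max (lderiv f I t) (rderiv f I t)})"

end

theory Submission
  imports Defs
begin

lemma Gfun_nonneg: "0 \<le> Gfun a h x"
  by (simp add: Gfun_def)

lemma Gfun_sq: "(Gfun a h x)^2 = (x - a)^2 + h^2"
  by (simp add: Gfun_def)

lemma Gfun_lip: "\<bar>Gfun a h x - Gfun a h y\<bar> \<le> \<bar>x - y\<bar>"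
proof -
  have "\<bar>cmod (Complex (x-a) h) - cmod (Complex (y-a) h)\<bar> \<le> cmod (Complex (x-a) h - Complex (y-a) h)"
    by (rule norm_triangle_ineq3)
  also have "Complex (x-a) h - Complex (y-a) h = Complex (x - y) 0" by (simp add: complex_eq_iff)
  also have "cmod (Complex (x - y) 0) = \<bar>x - y\<bar>" by (simp add: complex_norm)
  finally show ?thesis by (simp add: Gfun_def complex_norm)
qed

lemma Gdiff_lin:
  fixes x y z :: real
  shows "((Gfun c k y)^2 - (Gfun a h y)^2) * (z - x) = (z - y) * ((Gfun c k x)^2 - (Gfun a h x)^2) + (y - x) * ((Gfun c k z)^2 - (Gfun a h z)^2)"
  unfolding Gfun_sq by (simp add: algebra_simps power2_eq_square)

lemma part1:
  assumes iv: "is_interval I" and conv: "G_convex I f" and g: "g \<in> Gclass"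
    and t1: "t1 \<in> I" and t2: "t2 \<in> I" and lt: "t1 < t2"
    and e1: "g t1 = f t1" and e2: "g t2 = f t2"
  shows "(\<forall>t\<in>{t1..t2}. f t \<le> g t) \<and> (\<forall>t\<in>I - {t1..t2}. g t \<le> f t)"
proof -
  obtain a h where gdef: "g = Gfun a h" using g unfolding Gclass_def by blast
  have tan: "\<exists>c k. Gfun c k x = f x \<and> (\<forall>s\<in>I. Gfun c k s \<le> f s)" if "x \<in> I" for x
    using conv that unfolding G_convex_def G_tangent_def Gclass_def by fastforce
  have sqle: "u\<^sup>2 \<le> w\<^sup>2" if "0 \<le> u" "u \<le> w" for u w :: real
    using that by (simp add: power_mono)
  have sqlt: "u\<^sup>2 < w\<^sup>2" if "0 \<le> u" "u < w" for u w :: real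
    using that by (simp add: power_strict_mono)
  have A: "f t \<le> g t" if "t1 \<le> t" "t \<le> t2" for t
  proof (rule ccontr)
    assume nl: "\<not> f t \<le> g t"
    have tI: "t \<in> I" using iv t1 t2 that unfolding is_interval_1 by blast
    obtain c k where c: "Gfun c k t = f t" "\<forall>s\<in>I. Gfun c k s \<le> f s" using tan[OF tI] by blast
    define D where "D \<equiv> \<lambda>x. (Gfun c k x)^2 - (Gfun a h x)^2"
    have Dt: "D t > 0" unfolding D_def using nl c gdef sqlt[of "Gfun a h t" "Gfun c k t"] Gfun_nonneg by simp
    moreover have "D t1 \<le> 0" unfolding D_def using c t1 e1 gdef sqle[of "Gfun c k t1" "Gfun a h t1"] Gfun_nonneg by simp
    moreover have "D t2 \<le> 0" unfolding D_def using c t2 e2 gdef sqle[of "Gfun c k t2" "Gfun a h t2"] Gfun_nonneg by simp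
    moreover have "D t * (t2 - t1) = (t2 - t) * D t1 + (t - t1) * D t2" unfolding D_def by (simp only: Gdiff_lin)
    moreover have "(t2 - t) * D t1 \<le> 0" "(t - t1) * D t2 \<le> 0"
      using calculation that by (auto intro: mult_nonneg_nonpos)
    moreover have "D t * (t2 - t1) > 0" using Dt lt by simp
    ultimately show False by linarith
  qed
  have B: "g t \<le> f t" if "t \<in> I" "t \<notin> {t1..t2}" for t
  proof (rule ccontr)
    assume nl: "\<not> g t \<le> f t"
    show False
    proof (cases "t < t1")
      case True
      obtain c k where c: "Gfun c k t1 = f t1" "\<forall>s\<in>I. Gfun c k s \<le> f s" using tan[OF t1] by blast
      define D where "D \<equiv> \<lambda>x. (Gfun c k x)^2 - (Gfun a h x)^2"
      have Dt: "D t < 0" unfolding D_def using nl c that gdef sqlt[of "Gfun c k t" "Gfun a h t"] Gfun_nonneg[of c k t] by force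
      moreover have "D t1 = 0" unfolding D_def using c e1 gdef by simp
      moreover have Dt2: "D t2 \<le> 0" unfolding D_def using c t2 e2 gdef sqle[of "Gfun c k t2" "Gfun a h t2"] Gfun_nonneg by simp
      moreover have "D t1 * (t2 - t) = (t2 - t1) * D t + (t1 - t) * D t2" unfolding D_def by (simp only: Gdiff_lin)
      moreover have "(t2 - t1) * D t < 0" using Dt lt by (simp add: mult_pos_neg)
      moreover have "(t1 - t) * D t2 \<le> 0" using Dt2 True by (auto intro: mult_nonneg_nonpos)
      ultimately show False by (metis add_neg_nonpos less_irrefl mult_zero_left)
    next
      case False
      then have tt: "t2 < t" using that by auto
      obtain c k where c: "Gfun c k t2 = f t2" "\<forall>s\<in>I. Gfun c k s \<le> f s" using tan[OF t2] by blast
      define D where "D \<equiv> \<lambda>x. (Gfun c k x)^2 - (Gfun a h x)^2"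
      have Dt: "D t < 0" unfolding D_def using nl c that gdef sqlt[of "Gfun c k t" "Gfun a h t"] Gfun_nonneg[of c k t] by force
      moreover have "D t2 = 0" unfolding D_def using c e2 gdef by simp
      moreover have Dt1: "D t1 \<le> 0" unfolding D_def using c t1 e1 gdef sqle[of "Gfun c k t1" "Gfun a h t1"] Gfun_nonneg by simp
      moreover have "D t2 * (t - t1) = (t - t2) * D t1 + (t2 - t1) * D t" unfolding D_def by (simp only: Gdiff_lin)
      moreover have "(t2 - t1) * D t < 0" using Dt lt by (simp add: mult_pos_neg)
      moreover have "(t - t2) * D t1 \<le> 0" using Dt1 tt by (auto intro: mult_nonneg_nonpos)
      ultimately show False by (metis add_nonpos_neg less_irrefl mult_zero_left)
    qed
  qed
  show ?thesis using A B by auto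
qed


locale GS =
  fixes I :: "real set" and f :: "real \<Rightarrow> real"
  assumes iv: "is_interval I" and two: "\<exists>a\<in>I. \<exists>b\<in>I. a < b"
  and hyp: "\<forall>t1\<in>I. \<forall>t2\<in>I. t1 < t2 \<longrightarrow>
           (\<exists>g\<in>Gclass. g t1 = f t1 \<and> g t2 = f t2 \<and> (\<forall>t\<in>{t1..t2}. f t \<le> g t))"
begin

lemma inI: "x \<in> I \<Longrightarrow> z \<in> I \<Longrightarrow> x \<le> y \<Longrightarrow> y \<le> z \<Longrightarrow> y \<in> I"
  using iv unfolding is_interval_1 by blast

lemma hypG:
  assumes "t1 \<in> I" "t2 \<in> I" "t1 < t2"
  obtains a h where "Gfun a h t1 = f t1" "Gfun a h t2 = f t2"
    "\<And>t. t1 \<le> t \<Longrightarrow> t \<le> t2 \<Longrightarrow> f t \<le> Gfun a h t"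
proof -
  obtain g where g: "g \<in> Gclass" "g t1 = f t1" "g t2 = f t2" "\<forall>t\<in>{t1..t2}. f t \<le> g t"
    using hyp assms by blast
  then obtain a h where "g = Gfun a h" unfolding Gclass_def by blast
  then show ?thesis using that g by auto
qed

lemma fnn: assumes "t \<in> I" shows "0 \<le> f t"
proof -
  obtain a b where ab: "a \<in> I" "b \<in> I" "a < b" using two by blast
  show ?thesis
  proof (cases "t < b")
    case True
    then obtain c h where "Gfun c h t = f t" using hypG[OF assms ab(2)] by metis
    then show ?thesis using Gfun_nonneg by metis
  next
    case False
    then have "a < t" using ab by auto
    then obtain c h where "Gfun c h t = f t" using hypG[OF ab(1) assms] by metis
    then show ?thesis using Gfun_nonneg by metis
  qed
qed

lemma lip: assumes "s \<in> I" "t \<in> I" shows "\<bar>f s - f t\<bar> \<le> \<bar>s - t\<bar>"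
proof -
  consider "s < t" | "s = t" | "t < s" by linarith
  then show ?thesis
  proof cases
    case 1
    then obtain a h where "Gfun a h s = f s" "Gfun a h t = f t" using hypG[OF assms] by metis
    then show ?thesis using Gfun_lip[of a h s t] by simp
  next
    case 2 then show ?thesis by simp
  next
    case 3
    then obtain a h where "Gfun a h s = f s" "Gfun a h t = f t" using hypG[OF assms(2,1)] by metis
    then show ?thesis using Gfun_lip[of a h s t] by simp
  qed
qed

definition ph :: "real \<Rightarrow> real" where "ph t = (f t)^2 - t^2"
definition sl :: "real \<Rightarrow> real \<Rightarrow> real" where "sl x y = (ph y - ph x) / (y - x)"

lemma sl_sym: "sl x y = sl y x"
  unfolding sl_def by (simp add: divide_simps algebra_simps) 

lemma conv3:
  assumes "x \<in> I" "z \<in> I" "x < y" "y < z"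
  shows "ph y * (z - x) \<le> (z - y) * ph x + (y - x) * ph z"
proof -
  obtain a h where g: "Gfun a h x = f x" "Gfun a h z = f z"
    "\<And>t. x \<le> t \<Longrightarrow> t \<le> z \<Longrightarrow> f t \<le> Gfun a h t"
    using hypG[OF assms(1,2)] assms by (metis less_trans)
  have yI: "y \<in> I" using inI[OF assms(1,2), of y] assms by simp
  have fy: "(f y)^2 \<le> (y - a)^2 + h^2"
    using power_mono[OF g(3)[of y] fnn[OF yI], of 2] assms by (simp add: Gfun_sq)
  have fx: "(f x)^2 = (x - a)^2 + h^2" using g(1) Gfun_sq by metis
  have fz: "(f z)^2 = (z - a)^2 + h^2" using g(2) Gfun_sq by metis
  have id: "((y - a)^2 + h^2 - y^2) * (z - x) = (z - y) * ((x - a)^2 + h^2 - x^2) + (y - x) * ((z - a)^2 + h^2 - z^2)"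
    by (simp add: algebra_simps power2_eq_square)
  have "ph y * (z - x) \<le> ((y - a)^2 + h^2 - y^2) * (z - x)"
    unfolding ph_def using fy assms by (intro mult_right_mono) auto
  also have "\<dots> = (z - y) * ph x + (y - x) * ph z" unfolding id ph_def fx fz by simp
  finally show ?thesis .
qed

lemma slopes:
  assumes "x \<in> I" "z \<in> I" "x < y" "y < z"
  shows "sl x y \<le> sl x z" "sl x z \<le> sl y z"
proof -
  have c: "ph y * (z - x) \<le> (z - y) * ph x + (y - x) * ph z" by (rule conv3[OF assms])
  have p1: "0 < y - x" "0 < z - x" "0 < z - y" using assms by auto
  have "(ph y - ph x) * (z - x) \<le> (ph z - ph x) * (y - x)" using c by (simp add: algebra_simps)
  then show "sl x y \<le> sl x z" unfolding sl_def using p1 by (simp add: divide_simps)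
  have "(ph z - ph x) * (z - y) \<le> (ph z - ph y) * (z - x)" using c by (simp add: algebra_simps)
  then show "sl x z \<le> sl y z" unfolding sl_def using p1 by (simp add: divide_simps)
qed

lemma zero_case:
  assumes t0: "t0 \<in> I" and z: "f t0 = 0" and t: "t \<in> I"
  shows "f t = \<bar>t - t0\<bar>"
proof -
  have key: "a = t0 \<and> h = 0" if "Gfun a h t0 = 0" for a h
  proof -
    have "(t0 - a)^2 + h^2 = 0" using that Gfun_sq[of a h t0] by simp
    then show ?thesis by (simp add: sum_power2_eq_zero_iff)
  qed
  consider "t < t0" | "t = t0" | "t0 < t" by linarith
  then show ?thesis
  proof cases
    case 1
    then obtain a h where "Gfun a h t = f t" "Gfun a h t0 = f t0" using hypG[OF t t0] by metis
    then show ?thesis using key z by (auto simp: Gfun_def)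
  next
    case 2 then show ?thesis using z by simp
  next
    case 3
    then obtain a h where "Gfun a h t = f t" "Gfun a h t0 = f t0" using hypG[OF t0 t] by metis
    then show ?thesis using key z by (auto simp: Gfun_def)
  qed
qed

lemma quot_bound:
  assumes "t0 \<in> I" "t \<in> I" "t \<noteq> t0"
  shows "\<bar>(f t - f t0) / (t - t0)\<bar> \<le> 1"
  using lip[OF assms(2,1)] assms(3) by (simp add: abs_divide divide_le_eq)

lemma sl_F:
  assumes "t \<noteq> t0"
  shows "sl t0 t + (t + t0) = ((f t - f t0) / (t - t0)) * (f t + f t0)"
proof -
  have "t - t0 \<noteq> 0" using assms by simp
  then show ?thesis unfolding sl_def ph_def
    by (simp add: divide_simps) (simp add: algebra_simps power2_eq_square)
qed

lemma sl_near_lower: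
  assumes "t0 \<in> I" "t \<in> I" "t \<noteq> t0" "\<bar>t - t0\<bar> \<le> 1"
  shows "sl t0 t \<ge> -(2 * f t0 + 2 + 2 * \<bar>t0\<bar>)" "sl t0 t \<le> 2 * f t0 + 2 + 2 * \<bar>t0\<bar>"
proof -
  define q where "q = (f t - f t0) / (t - t0)"
  have q: "\<bar>q\<bar> \<le> 1" unfolding q_def using quot_bound assms by blast
  have X: "0 \<le> f t + f t0" using fnn assms by (simp add: add_nonneg_nonneg)
  have X2: "f t + f t0 \<le> 2 * f t0 + 1" using lip[OF assms(2,1)] assms(4) by linarith
  have "-1 * (f t + f t0) \<le> q * (f t + f t0)" using q X by (intro mult_right_mono) auto
  moreover have "q * (f t + f t0) \<le> 1 * (f t + f t0)" using q X by (intro mult_right_mono) auto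
  moreover have e: "sl t0 t = q * (f t + f t0) - (t + t0)" using sl_F[OF assms(3)] q_def by simp
  ultimately show "sl t0 t \<ge> -(2 * f t0 + 2 + 2 * \<bar>t0\<bar>)" "sl t0 t \<le> 2 * f t0 + 2 + 2 * \<bar>t0\<bar>"
    using X2 assms(4) by (auto simp: abs_if split: if_splits)
qed

definition Rset where "Rset t0 = sl t0 ` (I \<inter> {t0<..})"
definition Lset where "Lset t0 = (\<lambda>t. sl t t0) ` (I \<inter> {..<t0})"
definition Rphi where "Rphi t0 = Inf (Rset t0)"
definition Lphi where "Lphi t0 = Sup (Lset t0)"

lemma Rbdd:
  assumes t0: "t0 \<in> I" and b: "b \<in> I" "t0 < b"
  shows "bdd_below (Rset t0)"
proof -
  define K where "K = -(2 * f t0 + 2 + 2 * \<bar>t0\<bar>)"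
  have "K \<le> sl t0 t" if "t \<in> I" "t0 < t" for t
  proof (cases "t \<le> t0 + 1")
    case True then show ?thesis using sl_near_lower(1)[OF t0 that(1)] that K_def by simp
  next
    case False
    have cI: "t0 + 1 \<in> I" using inI[OF t0 that(1)] False by simp
    have "K \<le> sl t0 (t0 + 1)" using sl_near_lower(1)[OF t0 cI] K_def by simp
    also have "\<dots> \<le> sl t0 t" using slopes(1)[OF t0 that(1)] False by simp
    finally show ?thesis .
  qed
  then show ?thesis unfolding Rset_def bdd_below_def by auto
qed

lemma Lbdd:
  assumes t0: "t0 \<in> I" and a: "a \<in> I" "a < t0"
  shows "bdd_above (Lset t0)"
proof -
  define K where "K = (2 * f t0 + 2 + 2 * \<bar>t0\<bar>)"
  have "sl t t0 \<le> K" if "t \<in> I" "t < t0" for t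
  proof (cases "t0 - 1 \<le> t")
    case True then show ?thesis using sl_near_lower(2)[OF t0 that(1)] that K_def sl_sym by simp
  next
    case False
    have cI: "t0 - 1 \<in> I" using inI[OF that(1) t0] False by simp
    have "sl t t0 \<le> sl (t0 - 1) t0" using slopes(2)[OF that(1) t0] False by simp
    also have "\<dots> \<le> K" using sl_near_lower(2)[OF t0 cI] K_def sl_sym by simp
    finally show ?thesis .
  qed
  then show ?thesis unfolding Lset_def bdd_above_def by auto
qed


lemma Rne: "t0 < b \<Longrightarrow> b \<in> I \<Longrightarrow> t0 \<in> I \<Longrightarrow> Rset t0 \<noteq> {}"
  unfolding Rset_def by auto

lemma Lne: "a < t0 \<Longrightarrow> a \<in> I \<Longrightarrow> t0 \<in> I \<Longrightarrow> Lset t0 \<noteq> {}"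
  unfolding Lset_def by auto

lemma nontrivR:
  assumes "t0 < b" "b \<in> I" "t0 \<in> I"
  shows "at t0 within (I \<inter> {t0<..}) \<noteq> bot"
proof -
  have "{t0<..<b} \<subseteq> I \<inter> {t0<..}" using inI[OF assms(3,2)] by auto
  then have "t0 islimpt (I \<inter> {t0<..})"
    using islimpt_subset islimpt_greaterThanLessThan1[OF assms(1)] by blast
  then show ?thesis using trivial_limit_within by blast
qed

lemma nontrivL:
  assumes "a < t0" "a \<in> I" "t0 \<in> I"
  shows "at t0 within (I \<inter> {..<t0}) \<noteq> bot"
proof -
  have "{a<..<t0} \<subseteq> I \<inter> {..<t0}" using inI[OF assms(2,3)] by auto
  then have "t0 islimpt (I \<inter> {..<t0})"
    using islimpt_subset islimpt_greaterThanLessThan2[OF assms(1)] by blast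
  then show ?thesis using trivial_limit_within by blast
qed

lemma fcont:
  assumes "t0 \<in> I" "X \<subseteq> I"
  shows "(f \<longlongrightarrow> f t0) (at t0 within X)"
proof (rule tendstoI)
  fix e :: real assume e: "e > 0"
  show "\<forall>\<^sub>F t in at t0 within X. dist (f t) (f t0) < e"
    unfolding eventually_at
  proof (intro exI[of _ e] conjI ballI impI)
    fix t assume "t \<in> X" "t \<noteq> t0 \<and> dist t t0 < e"
    then show "dist (f t) (f t0) < e" using lip[of t t0] assms by (auto simp: dist_real_def)
  qed (use e in auto)
qed

lemma Rtend:
  assumes t0: "t0 \<in> I" and b: "b \<in> I" "t0 < b"
  shows "(sl t0 \<longlongrightarrow> Rphi t0) (at t0 within (I \<inter> {t0<..}))"
proof (rule tendstoI)
  fix e :: real assume e: "e > 0"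
  have bd: "bdd_below (Rset t0)" using Rbdd[OF t0 b] .
  have ne: "Rset t0 \<noteq> {}" using Rne b t0 by auto
  have "Inf (Rset t0) < Rphi t0 + e" using e Rphi_def by simp
  then obtain x where "x \<in> Rset t0" "x < Rphi t0 + e" using cInf_less_iff[OF ne bd] by blast
  then obtain t1 where t1: "t1 \<in> I" "t0 < t1" "sl t0 t1 < Rphi t0 + e" unfolding Rset_def by auto
  show "\<forall>\<^sub>F t in at t0 within (I \<inter> {t0<..}). dist (sl t0 t) (Rphi t0) < e"
    unfolding eventually_at
  proof (intro exI[of _ "t1 - t0"] conjI ballI impI)
    fix t assume tt: "t \<in> I \<inter> {t0<..}" "t \<noteq> t0 \<and> dist t t0 < t1 - t0"
    then have "t < t1" by (auto simp: dist_real_def)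
    then have "sl t0 t \<le> sl t0 t1" using slopes(1)[OF t0 t1(1)] tt by auto
    moreover have "Rphi t0 \<le> sl t0 t" unfolding Rphi_def using tt bd
      by (intro cInf_lower) (auto simp: Rset_def)
    ultimately show "dist (sl t0 t) (Rphi t0) < e" using t1 by (auto simp: dist_real_def)
  qed (use t1 in auto)
qed

lemma Ltend:
  assumes t0: "t0 \<in> I" and a: "a \<in> I" "a < t0"
  shows "((\<lambda>t. sl t t0) \<longlongrightarrow> Lphi t0) (at t0 within (I \<inter> {..<t0}))"
proof (rule tendstoI)
  fix e :: real assume e: "e > 0"
  have bd: "bdd_above (Lset t0)" using Lbdd[OF t0 a] .
  have ne: "Lset t0 \<noteq> {}" using Lne a t0 by auto
  have "Lphi t0 - e < Sup (Lset t0)" using e Lphi_def by simp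
  then obtain x where "x \<in> Lset t0" "Lphi t0 - e < x" using less_cSup_iff[OF ne bd] by blast
  then obtain t1 where t1: "t1 \<in> I" "t1 < t0" "Lphi t0 - e < sl t1 t0" unfolding Lset_def by auto
  show "\<forall>\<^sub>F t in at t0 within (I \<inter> {..<t0}). dist (sl t t0) (Lphi t0) < e"
    unfolding eventually_at
  proof (intro exI[of _ "t0 - t1"] conjI ballI impI)
    fix t assume tt: "t \<in> I \<inter> {..<t0}" "t \<noteq> t0 \<and> dist t t0 < t0 - t1"
    then have "t1 < t" by (auto simp: dist_real_def)
    then have "sl t1 t0 \<le> sl t t0" using slopes(2)[OF t1(1) t0] tt by auto
    moreover have "sl t t0 \<le> Lphi t0" unfolding Lphi_def using tt bd
      by (intro cSup_upper) (auto simp: Lset_def)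
    ultimately show "dist (sl t t0) (Lphi t0) < e" using t1 by (auto simp: dist_real_def)
  qed (use t1 in auto)
qed

lemma quot_eq:
  assumes "t0 \<in> I" "t \<in> I" "t \<noteq> t0" "f t0 > 0"
  shows "(f t - f t0) / (t - t0) = (sl t0 t + (t + t0)) / (f t + f t0)"
proof -
  have "f t + f t0 > 0" using fnn[OF assms(2)] assms(4) by simp
  then show ?thesis using sl_F[OF assms(3)] by simp
qed

lemma Rderiv:
  assumes t0: "t0 \<in> I" and b: "b \<in> I" "t0 < b" and pos: "f t0 > 0"
  shows "has_rderiv f I t0 ((Rphi t0 + 2 * t0) / (2 * f t0))"
proof -
  let ?F = "at t0 within (I \<inter> {t0<..})"
  have lim: "((\<lambda>t. (sl t0 t + (t + t0)) / (f t + f t0)) \<longlongrightarrow> (Rphi t0 + (t0 + t0)) / (f t0 + f t0)) ?F"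
  proof (rule tendsto_divide)
    show "((\<lambda>t. sl t0 t + (t + t0)) \<longlongrightarrow> Rphi t0 + (t0 + t0)) ?F"
      by (intro tendsto_add Rtend[OF t0 b] tendsto_ident_at tendsto_const)
    show "((\<lambda>t. f t + f t0) \<longlongrightarrow> f t0 + f t0) ?F"
      by (rule tendsto_add[OF fcont[OF t0 Int_lower1] tendsto_const])
  qed (use pos in auto)
  have ev: "\<forall>\<^sub>F t in ?F. (sl t0 t + (t + t0)) / (f t + f t0) = (f t - f t0) / (t - t0)"
    unfolding eventually_at
  proof (intro exI[of _ 1] conjI ballI impI)
    fix t assume a1: "t \<in> I \<inter> {t0<..}" and a2: "t \<noteq> t0 \<and> dist t t0 < 1"
    have "t \<in> I" using a1 by blast
    moreover have "t \<noteq> t0" using a2 by blast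
    ultimately show "(sl t0 t + (t + t0)) / (f t + f t0) = (f t - f t0) / (t - t0)"
      using quot_eq[OF t0 _ _ pos] by metis
  qed simp
  have "((\<lambda>t. (f t - f t0) / (t - t0)) \<longlongrightarrow> (Rphi t0 + (t0 + t0)) / (f t0 + f t0)) ?F"
    using tendsto_cong[OF ev] lim by blast
  moreover have "(Rphi t0 + (t0 + t0)) / (f t0 + f t0) = (Rphi t0 + 2 * t0) / (2 * f t0)"
    by (simp only: mult_2)
  ultimately show ?thesis unfolding has_rderiv_def has_field_derivative_iff by (simp only:)
qed

lemma Lderiv:
  assumes t0: "t0 \<in> I" and a: "a \<in> I" "a < t0" and pos: "f t0 > 0"
  shows "has_lderiv f I t0 ((Lphi t0 + 2 * t0) / (2 * f t0))"
proof -
  let ?F = "at t0 within (I \<inter> {..<t0})"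
  have lim: "((\<lambda>t. (sl t t0 + (t + t0)) / (f t + f t0)) \<longlongrightarrow> (Lphi t0 + (t0 + t0)) / (f t0 + f t0)) ?F"
  proof (rule tendsto_divide)
    show "((\<lambda>t. sl t t0 + (t + t0)) \<longlongrightarrow> Lphi t0 + (t0 + t0)) ?F"
      by (intro tendsto_add Ltend[OF t0 a] tendsto_ident_at tendsto_const)
    show "((\<lambda>t. f t + f t0) \<longlongrightarrow> f t0 + f t0) ?F"
      by (rule tendsto_add[OF fcont[OF t0 Int_lower1] tendsto_const])
  qed (use pos in auto)
  have ev: "\<forall>\<^sub>F t in ?F. (sl t t0 + (t + t0)) / (f t + f t0) = (f t - f t0) / (t - t0)"
    unfolding eventually_at
  proof (intro exI[of _ 1] conjI ballI impI)
    fix t assume a1: "t \<in> I \<inter> {..<t0}" and a2: "t \<noteq> t0 \<and> dist t t0 < 1"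
    have "t \<in> I" using a1 by blast
    moreover have "t \<noteq> t0" using a2 by blast
    ultimately show "(sl t t0 + (t + t0)) / (f t + f t0) = (f t - f t0) / (t - t0)"
      using quot_eq[OF t0 _ _ pos] sl_sym by metis
  qed simp
  have "((\<lambda>t. (f t - f t0) / (t - t0)) \<longlongrightarrow> (Lphi t0 + (t0 + t0)) / (f t0 + f t0)) ?F"
    using tendsto_cong[OF ev] lim by blast
  moreover have "(Lphi t0 + (t0 + t0)) / (f t0 + f t0) = (Lphi t0 + 2 * t0) / (2 * f t0)"
    by (simp only: mult_2)
  ultimately show ?thesis unfolding has_lderiv_def has_field_derivative_iff by (simp only:)
qed


lemma Rzero:
  assumes t0: "t0 \<in> I" and z: "f t0 = 0"
  shows "has_rderiv f I t0 1"
proof -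
  let ?F = "at t0 within (I \<inter> {t0<..})"
  have ev: "\<forall>\<^sub>F t in ?F. 1 = (f t - f t0) / (t - t0)"
    unfolding eventually_at
  proof (intro exI[of _ 1] conjI ballI impI)
    fix t assume a1: "t \<in> I \<inter> {t0<..}" and a2: "t \<noteq> t0 \<and> dist t t0 < 1"
    have "f t = \<bar>t - t0\<bar>" using zero_case[OF t0 z] a1 by blast
    then have "f t - f t0 = t - t0" using a1 z by simp
    then show "1 = (f t - f t0) / (t - t0)" using a1 by simp
  qed simp
  have "((\<lambda>t. (f t - f t0) / (t - t0)) \<longlongrightarrow> 1) ?F"
    using tendsto_cong[OF ev] tendsto_const by blast
  then show ?thesis unfolding has_rderiv_def has_field_derivative_iff .
qed

lemma Lzero:
  assumes t0: "t0 \<in> I" and z: "f t0 = 0"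
  shows "has_lderiv f I t0 (-1)"
proof -
  let ?F = "at t0 within (I \<inter> {..<t0})"
  have ev: "\<forall>\<^sub>F t in ?F. -1 = (f t - f t0) / (t - t0)"
    unfolding eventually_at
  proof (intro exI[of _ 1] conjI ballI impI)
    fix t assume a1: "t \<in> I \<inter> {..<t0}" and a2: "t \<noteq> t0 \<and> dist t t0 < 1"
    have "f t = \<bar>t - t0\<bar>" using zero_case[OF t0 z] a1 by blast
    then have "f t - f t0 = -(t - t0)" using a1 z by simp
    moreover have "t - t0 \<noteq> 0" using a1 by simp
    ultimately show "-1 = (f t - f t0) / (t - t0)" by (simp add: divide_simps)
  qed simp
  have "((\<lambda>t. (f t - f t0) / (t - t0)) \<longlongrightarrow> -1) ?F"
    using tendsto_cong[OF ev] tendsto_const by blast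
  then show ?thesis unfolding has_lderiv_def has_field_derivative_iff .
qed

lemma rexists:
  assumes t0: "t0 \<in> I" and b: "b \<in> I" "t0 < b"
  shows "\<exists>v. has_rderiv f I t0 v"
proof (cases "f t0 = 0")
  case True then show ?thesis using Rzero[OF t0] by blast
next
  case False then have "f t0 > 0" using fnn[OF t0] by simp
  then show ?thesis using Rderiv[OF t0 b] by blast
qed

lemma lexists:
  assumes t0: "t0 \<in> I" and a: "a \<in> I" "a < t0"
  shows "\<exists>v. has_lderiv f I t0 v"
proof (cases "f t0 = 0")
  case True then show ?thesis using Lzero[OF t0] by blast
next
  case False then have "f t0 > 0" using fnn[OF t0] by simp
  then show ?thesis using Lderiv[OF t0 a] by blast
qed

lemma rderiv_eq:
  assumes t0: "t0 \<in> I" and b: "b \<in> I" "t0 < b" and v: "has_rderiv f I t0 v"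
  shows "rderiv f I t0 = v"
  unfolding rderiv_def
proof (rule the_equality)
  show "has_rderiv f I t0 v" by (rule v)
  fix w assume "has_rderiv f I t0 w"
  then show "w = v" using v nontrivR[OF b(2,1) t0] tendsto_unique
    unfolding has_rderiv_def has_field_derivative_iff by metis
qed

lemma lderiv_eq:
  assumes t0: "t0 \<in> I" and a: "a \<in> I" "a < t0" and v: "has_lderiv f I t0 v"
  shows "lderiv f I t0 = v"
  unfolding lderiv_def
proof (rule the_equality)
  show "has_lderiv f I t0 v" by (rule v)
  fix w assume "has_lderiv f I t0 w"
  then show "w = v" using v nontrivL[OF a(2,1) t0] tendsto_unique
    unfolding has_lderiv_def has_field_derivative_iff by metis
qed

lemma rbound:
  assumes t0: "t0 \<in> I" and b: "b \<in> I" "t0 < b" and v: "has_rderiv f I t0 v"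
  shows "\<bar>v\<bar> \<le> 1"
proof -
  let ?F = "at t0 within (I \<inter> {t0<..})"
  have lim: "((\<lambda>t. (f t - f t0) / (t - t0)) \<longlongrightarrow> v) ?F"
    using v unfolding has_rderiv_def has_field_derivative_iff .
  have ev: "\<forall>\<^sub>F t in ?F. \<bar>(f t - f t0) / (t - t0)\<bar> \<le> 1"
    unfolding eventually_at
  proof (intro exI[of _ 1] conjI ballI impI)
    fix t assume a1: "t \<in> I \<inter> {t0<..}" and a2: "t \<noteq> t0 \<and> dist t t0 < 1"
    show "\<bar>(f t - f t0) / (t - t0)\<bar> \<le> 1" using quot_bound[OF t0] a1 a2 by blast
  qed simp
  have "\<bar>v\<bar> \<le> 1"
    by (rule tendsto_upperbound[OF tendsto_rabs[OF lim] ev nontrivR[OF b(2,1) t0]])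
  then show ?thesis .
qed

lemma lbound:
  assumes t0: "t0 \<in> I" and a: "a \<in> I" "a < t0" and v: "has_lderiv f I t0 v"
  shows "\<bar>v\<bar> \<le> 1"
proof -
  let ?F = "at t0 within (I \<inter> {..<t0})"
  have lim: "((\<lambda>t. (f t - f t0) / (t - t0)) \<longlongrightarrow> v) ?F"
    using v unfolding has_lderiv_def has_field_derivative_iff .
  have ev: "\<forall>\<^sub>F t in ?F. \<bar>(f t - f t0) / (t - t0)\<bar> \<le> 1"
    unfolding eventually_at
  proof (intro exI[of _ 1] conjI ballI impI)
    fix t assume a1: "t \<in> I \<inter> {..<t0}" and a2: "t \<noteq> t0 \<and> dist t t0 < 1"
    show "\<bar>(f t - f t0) / (t - t0)\<bar> \<le> 1" using quot_bound[OF t0] a1 a2 by blast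
  qed simp
  show ?thesis
    by (rule tendsto_upperbound[OF tendsto_rabs[OF lim] ev nontrivL[OF a(2,1) t0]])
qed


lemma final_alg:
  assumes "(s - t0) * (2 * f t0 * v - 2 * t0) \<le> ph s - ph t0"
  shows "(f t0)^2 + 2 * (s - t0) * f t0 * v + (s - t0)^2 \<le> (f s)^2"
proof -
  have "(f s)^2 - ((f t0)^2 + 2 * (s - t0) * f t0 * v + (s - t0)^2)
        = (ph s - ph t0) - (s - t0) * (2 * f t0 * v - 2 * t0)"
    unfolding ph_def by (simp add: algebra_simps power2_eq_square)
  then show ?thesis using assms by linarith
qed

lemma tanR:
  assumes t0: "t0 \<in> I" and b: "b \<in> I" "t0 < b" and v: "v \<le> rderiv f I t0"
    and s: "s \<in> I" "t0 < s"
  shows "(f t0)^2 + 2 * (s - t0) * f t0 * v + (s - t0)^2 \<le> (f s)^2"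
proof (cases "f t0 = 0")
  case True
  then have "f s = \<bar>s - t0\<bar>" using zero_case[OF t0 _ s(1)] by blast
  then show ?thesis using True by simp
next
  case False
  then have pos: "f t0 > 0" using fnn[OF t0] by simp
  have r: "rderiv f I t0 = (Rphi t0 + 2 * t0) / (2 * f t0)"
    using rderiv_eq[OF t0 b Rderiv[OF t0 b pos]] .
  have "2 * f t0 * v \<le> 2 * f t0 * rderiv f I t0" using v pos by simp
  also have "\<dots> = Rphi t0 + 2 * t0" unfolding r using pos by simp
  finally have A: "2 * f t0 * v - 2 * t0 \<le> Rphi t0" by simp
  have "Rphi t0 \<le> sl t0 s" unfolding Rphi_def
    by (rule cInf_lower) (use s Rbdd[OF t0 b] in \<open>auto simp: Rset_def\<close>)
  with A have "2 * f t0 * v - 2 * t0 \<le> sl t0 s" by linarith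
  then have "(s - t0) * (2 * f t0 * v - 2 * t0) \<le> (s - t0) * sl t0 s"
    using s by (intro mult_left_mono) auto
  also have "(s - t0) * sl t0 s = ph s - ph t0" unfolding sl_def using s by simp
  finally show ?thesis by (rule final_alg)
qed

lemma tanL:
  assumes t0: "t0 \<in> I" and a: "a \<in> I" "a < t0" and v: "lderiv f I t0 \<le> v"
    and s: "s \<in> I" "s < t0"
  shows "(f t0)^2 + 2 * (s - t0) * f t0 * v + (s - t0)^2 \<le> (f s)^2"
proof (cases "f t0 = 0")
  case True
  then have "f s = \<bar>s - t0\<bar>" using zero_case[OF t0 _ s(1)] by blast
  then show ?thesis using True by simp
next
  case False
  then have pos: "f t0 > 0" using fnn[OF t0] by simp
  have r: "lderiv f I t0 = (Lphi t0 + 2 * t0) / (2 * f t0)"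
    using lderiv_eq[OF t0 a Lderiv[OF t0 a pos]] .
  have "Lphi t0 + 2 * t0 = 2 * f t0 * lderiv f I t0" unfolding r using pos by simp
  also have "\<dots> \<le> 2 * f t0 * v" using v pos by simp
  finally have A: "Lphi t0 \<le> 2 * f t0 * v - 2 * t0" by simp
  have "sl s t0 \<le> Lphi t0" unfolding Lphi_def
    by (rule cSup_upper) (use s Lbdd[OF t0 a] in \<open>auto simp: Lset_def\<close>)
  with A have "sl s t0 \<le> 2 * f t0 * v - 2 * t0" by linarith
  then have "(t0 - s) * sl s t0 \<le> (t0 - s) * (2 * f t0 * v - 2 * t0)"
    using s by (intro mult_left_mono) auto
  moreover have "(t0 - s) * sl s t0 = ph t0 - ph s" unfolding sl_def using s by simp
  ultimately have "(s - t0) * (2 * f t0 * v - 2 * t0) \<le> ph s - ph t0"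
    by (simp add: algebra_simps)
  then show ?thesis by (rule final_alg)
qed

lemma LleR:
  assumes t0: "t0 \<in> I" and a: "a \<in> I" "a < t0" and b: "b \<in> I" "t0 < b"
  shows "lderiv f I t0 \<le> rderiv f I t0"
proof (cases "f t0 = 0")
  case True
  then show ?thesis using lderiv_eq[OF t0 a Lzero[OF t0 True]] rderiv_eq[OF t0 b Rzero[OF t0 True]]
    by simp
next
  case False
  then have pos: "f t0 > 0" using fnn[OF t0] by simp
  have "Lphi t0 \<le> Rphi t0" unfolding Lphi_def
  proof (rule cSup_least[OF Lne[OF a(2,1) t0]])
    fix x assume "x \<in> Lset t0"
    then obtain t where t: "t \<in> I" "t < t0" "x = sl t t0" unfolding Lset_def by auto
    show "x \<le> Rphi t0" unfolding Rphi_def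
    proof (rule cInf_greatest[OF Rne[OF b(2,1) t0]])
      fix y assume "y \<in> Rset t0"
      then obtain u where u: "u \<in> I" "t0 < u" "y = sl t0 u" unfolding Rset_def by auto
      have "sl t t0 \<le> sl t u" using slopes(1)[OF t(1) u(1)] t u by simp
      also have "\<dots> \<le> sl t0 u" using slopes(2)[OF t(1) u(1)] t u by simp
      finally show "x \<le> y" using t u by simp
    qed
  qed
  then have "(Lphi t0 + 2 * t0) / (2 * f t0) \<le> (Rphi t0 + 2 * t0) / (2 * f t0)"
    using pos by (intro divide_right_mono) auto
  then show ?thesis
    using lderiv_eq[OF t0 a Lderiv[OF t0 a pos]] rderiv_eq[OF t0 b Rderiv[OF t0 b pos]] by simp
qed

lemma tangent:
  assumes t0: "t0 \<in> I" and vb: "\<bar>v\<bar> \<le> 1"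
    and ineq: "\<And>s. s \<in> I \<Longrightarrow> (f t0)^2 + 2 * (s - t0) * f t0 * v + (s - t0)^2 \<le> (f s)^2"
  shows "(\<lambda>s. sqrt ((f t0)^2 + 2 * (s - t0) * f t0 * v + (s - t0)^2)) \<in> Gclass \<and>
         G_tangent I f t0 (\<lambda>s. sqrt ((f t0)^2 + 2 * (s - t0) * f t0 * v + (s - t0)^2))"
proof -
  let ?T = "\<lambda>s. sqrt ((f t0)^2 + 2 * (s - t0) * f t0 * v + (s - t0)^2)"
  have v2: "0 \<le> 1 - v^2" using vb abs_square_le_1 by auto
  have f0: "0 \<le> f t0" using fnn[OF t0] .
  have h0: "0 \<le> f t0 * sqrt (1 - v^2)" using f0 v2 by simp
  have "?T = Gfun (t0 - f t0 * v) (f t0 * sqrt (1 - v^2))"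
  proof
    fix s
    have "(s - (t0 - f t0 * v))^2 + (f t0 * sqrt (1 - v^2))^2
          = (f t0)^2 + 2 * (s - t0) * f t0 * v + (s - t0)^2"
      using v2 by (simp add: power_mult_distrib algebra_simps power2_eq_square)
    then show "?T s = Gfun (t0 - f t0 * v) (f t0 * sqrt (1 - v^2)) s"
      unfolding Gfun_def by simp
  qed
  then have G: "?T \<in> Gclass" unfolding Gclass_def using h0 by blast
  have "?T t0 = f t0" using f0 by simp
  moreover have "?T s \<le> f s" if "s \<in> I" for s
  proof -
    have "?T s \<le> sqrt ((f s)^2)" using ineq[OF that] by (rule real_sqrt_le_mono)
    also have "\<dots> = f s" using fnn[OF that] by simp
    finally show ?thesis .
  qed
  ultimately show ?thesis using G unfolding G_tangent_def by blast
qed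


lemma pm_good:
  assumes t0: "t0 \<in> I" and v0: "v0 \<in> pm_subdiff f I t0"
  shows "\<bar>v0\<bar> \<le> 1 \<and> (\<forall>s\<in>I. (f t0)^2 + 2 * (s - t0) * f t0 * v0 + (s - t0)^2 \<le> (f s)^2)"
proof -
  obtain a0 b0 where ab: "a0 \<in> I" "b0 \<in> I" "a0 < b0" using two by blast
  have triv: "(f t0)^2 + 2 * (t0 - t0) * f t0 * v0 + (t0 - t0)^2 \<le> (f t0)^2" by simp
  show ?thesis
  proof (cases "\<forall>s\<in>I. t0 \<le> s")
    case True
    then have b: "b0 \<in> I" "t0 < b0" using ab by force+
    have v: "v0 = rderiv f I t0" using v0 True unfolding pm_subdiff_def by simp
    obtain w where w: "has_rderiv f I t0 w" using rexists[OF t0 b] by blast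
    have bd: "\<bar>v0\<bar> \<le> 1" using rbound[OF t0 b w] rderiv_eq[OF t0 b w] v by simp
    have "(f t0)^2 + 2 * (s - t0) * f t0 * v0 + (s - t0)^2 \<le> (f s)^2" if s: "s \<in> I" for s
    proof (cases "s = t0")
      case True then show ?thesis using triv by simp
    next
      case False then have "t0 < s" using True s by force
      then show ?thesis using tanR[OF t0 b _ s] v by simp
    qed
    then show ?thesis using bd by blast
  next
    case nmin: False
    then obtain a where a: "a \<in> I" "a < t0" by force
    show ?thesis
    proof (cases "\<forall>s\<in>I. s \<le> t0")
      case True
      have v: "v0 = lderiv f I t0" using v0 True nmin unfolding pm_subdiff_def by simp
      obtain w where w: "has_lderiv f I t0 w" using lexists[OF t0 a] by blast
      have bd: "\<bar>v0\<bar> \<le> 1" using lbound[OF t0 a w] lderiv_eq[OF t0 a w] v by simp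
      have "(f t0)^2 + 2 * (s - t0) * f t0 * v0 + (s - t0)^2 \<le> (f s)^2" if s: "s \<in> I" for s
      proof (cases "s = t0")
        case True then show ?thesis using triv by simp
      next
        case False then have "s < t0" using True s by force
        then show ?thesis using tanL[OF t0 a _ s] v by simp
      qed
      then show ?thesis using bd by blast
    next
      case False
      then obtain b where b: "b \<in> I" "t0 < b" by force
      have LR: "lderiv f I t0 \<le> rderiv f I t0" using LleR[OF t0 a b] .
      have v: "lderiv f I t0 \<le> v0" "v0 \<le> rderiv f I t0"
        using v0 nmin False LR unfolding pm_subdiff_def by (auto simp: min_def max_def)
      obtain w where w: "has_rderiv f I t0 w" using rexists[OF t0 b] by blast
      obtain w' where w': "has_lderiv f I t0 w'" using lexists[OF t0 a] by blast
      have "\<bar>rderiv f I t0\<bar> \<le> 1" using rbound[OF t0 b w] rderiv_eq[OF t0 b w] by simp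
      moreover have "\<bar>lderiv f I t0\<bar> \<le> 1" using lbound[OF t0 a w'] lderiv_eq[OF t0 a w'] by simp
      ultimately have bd: "\<bar>v0\<bar> \<le> 1" using v by linarith
      have "(f t0)^2 + 2 * (s - t0) * f t0 * v0 + (s - t0)^2 \<le> (f s)^2" if s: "s \<in> I" for s
      proof -
        consider "s = t0" | "s < t0" | "t0 < s" by linarith
        then show ?thesis
        proof cases
          case 1 then show ?thesis using triv by simp
        next
          case 2 then show ?thesis using tanL[OF t0 a v(1) s] by simp
        next
          case 3 then show ?thesis using tanR[OF t0 b v(2) s] by simp
        qed
      qed
      then show ?thesis using bd by blast
    qed
  qed
qed

lemma main2:
  "(\<forall>t\<in>I. \<not> (\<forall>s\<in>I. s \<le> t) \<longrightarrow> (\<exists>v. has_rderiv f I t v)) \<and>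
   (\<forall>t\<in>I. \<not> (\<forall>s\<in>I. t \<le> s) \<longrightarrow> (\<exists>v. has_lderiv f I t v)) \<and>
   (\<forall>t0\<in>I. \<forall>v0\<in>pm_subdiff f I t0.
      (\<lambda>s. sqrt ((f t0)^2 + 2 * (s - t0) * f t0 * v0 + (s - t0)^2)) \<in> Gclass \<and>
      G_tangent I f t0 (\<lambda>s. sqrt ((f t0)^2 + 2 * (s - t0) * f t0 * v0 + (s - t0)^2))) \<and>
   G_convex I f"
proof -
  have A: "\<forall>t\<in>I. \<not> (\<forall>s\<in>I. s \<le> t) \<longrightarrow> (\<exists>v. has_rderiv f I t v)"
  proof (intro ballI impI)
    fix t assume t: "t \<in> I" "\<not> (\<forall>s\<in>I. s \<le> t)"
    then obtain b where "b \<in> I" "t < b" by force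
    then show "\<exists>v. has_rderiv f I t v" using rexists[OF t(1)] by blast
  qed
  have B: "\<forall>t\<in>I. \<not> (\<forall>s\<in>I. t \<le> s) \<longrightarrow> (\<exists>v. has_lderiv f I t v)"
  proof (intro ballI impI)
    fix t assume t: "t \<in> I" "\<not> (\<forall>s\<in>I. t \<le> s)"
    then obtain a where "a \<in> I" "a < t" by force
    then show "\<exists>v. has_lderiv f I t v" using lexists[OF t(1)] by blast
  qed
  have C: "\<forall>t0\<in>I. \<forall>v0\<in>pm_subdiff f I t0.
      (\<lambda>s. sqrt ((f t0)^2 + 2 * (s - t0) * f t0 * v0 + (s - t0)^2)) \<in> Gclass \<and>
      G_tangent I f t0 (\<lambda>s. sqrt ((f t0)^2 + 2 * (s - t0) * f t0 * v0 + (s - t0)^2))"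
  proof (intro ballI)
    fix t0 v0 assume t0: "t0 \<in> I" and v0: "v0 \<in> pm_subdiff f I t0"
    from pm_good[OF t0 v0] have "\<bar>v0\<bar> \<le> 1"
      "\<And>s. s \<in> I \<Longrightarrow> (f t0)^2 + 2 * (s - t0) * f t0 * v0 + (s - t0)^2 \<le> (f s)^2" by auto
    then show "(\<lambda>s. sqrt ((f t0)^2 + 2 * (s - t0) * f t0 * v0 + (s - t0)^2)) \<in> Gclass \<and>
      G_tangent I f t0 (\<lambda>s. sqrt ((f t0)^2 + 2 * (s - t0) * f t0 * v0 + (s - t0)^2))"
      using tangent[OF t0] by blast
  qed
  have D: "G_convex I f" unfolding G_convex_def
  proof
    fix t0 assume t0: "t0 \<in> I"
    have "pm_subdiff f I t0 \<noteq> {}" unfolding pm_subdiff_def by auto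
    then obtain v0 where "v0 \<in> pm_subdiff f I t0" by blast
    then show "\<exists>g. G_tangent I f t0 g" using C t0 by blast
  qed
  show ?thesis using A B C D by blast
qed

end

theorem mainTheorem16:
  fixes I :: "real set"
  assumes "is_interval I"
  shows
   "(\<forall>(f :: real \<Rightarrow> real) g t1 t2.
        G_convex I f \<and> g \<in> Gclass \<and> t1 \<in> I \<and> t2 \<in> I \<and> t1 < t2 \<and>
        g t1 = f t1 \<and> g t2 = f t2 \<longrightarrow>
          (\<forall>t\<in>{t1..t2}. f t \<le> g t) \<and> (\<forall>t\<in>I - {t1..t2}. g t \<le> f t))
    \<and>
    (\<forall>f :: real \<Rightarrow> real.
        (\<exists>a\<in>I. \<exists>b\<in>I. a < b) \<and>
        (\<forall>t1\<in>I. \<forall>t2\<in>I. t1 < t2 \<longrightarrow>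
           (\<exists>g\<in>Gclass. g t1 = f t1 \<and> g t2 = f t2 \<and> (\<forall>t\<in>{t1..t2}. f t \<le> g t)))
        \<longrightarrow>
          (\<forall>t\<in>I. \<not> (\<forall>s\<in>I. s \<le> t) \<longrightarrow> (\<exists>v. has_rderiv f I t v)) \<and>
          (\<forall>t\<in>I. \<not> (\<forall>s\<in>I. t \<le> s) \<longrightarrow> (\<exists>v. has_lderiv f I t v)) \<and>
          (\<forall>t0\<in>I. \<forall>v0\<in>pm_subdiff f I t0.
             (\<lambda>s. sqrt ((f t0)^2 + 2 * (s - t0) * f t0 * v0 + (s - t0)^2)) \<in> Gclass \<and>
             G_tangent I f t0 (\<lambda>s. sqrt ((f t0)^2 + 2 * (s - t0) * f t0 * v0 + (s - t0)^2))) \<and>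
          G_convex I f)"
proof (rule conjI; intro allI impI)
  fix f :: "real \<Rightarrow> real" and g t1 t2
  assume h: "G_convex I f \<and> g \<in> Gclass \<and> t1 \<in> I \<and> t2 \<in> I \<and> t1 < t2 \<and> g t1 = f t1 \<and> g t2 = f t2"
  show "(\<forall>t\<in>{t1..t2}. f t \<le> g t) \<and> (\<forall>t\<in>I - {t1..t2}. g t \<le> f t)"
    using part1[OF assms] h by blast
next
  fix f :: "real \<Rightarrow> real"
  assume h: "(\<exists>a\<in>I. \<exists>b\<in>I. a < b) \<and>
        (\<forall>t1\<in>I. \<forall>t2\<in>I. t1 < t2 \<longrightarrow>
           (\<exists>g\<in>Gclass. g t1 = f t1 \<and> g t2 = f t2 \<and> (\<forall>t\<in>{t1..t2}. f t \<le> g t)))"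
  interpret GS I f using assms h by unfold_locales auto
  show "(\<forall>t\<in>I. \<not> (\<forall>s\<in>I. s \<le> t) \<longrightarrow> (\<exists>v. has_rderiv f I t v)) \<and>
          (\<forall>t\<in>I. \<not> (\<forall>s\<in>I. t \<le> s) \<longrightarrow> (\<exists>v. has_lderiv f I t v)) \<and>
          (\<forall>t0\<in>I. \<forall>v0\<in>pm_subdiff f I t0.
             (\<lambda>s. sqrt ((f t0)^2 + 2 * (s - t0) * f t0 * v0 + (s - t0)^2)) \<in> Gclass \<and>
             G_tangent I f t0 (\<lambda>s. sqrt ((f t0)^2 + 2 * (s - t0) * f t0 * v0 + (s - t0)^2))) \<and>
          G_convex I f"
    by (rule main2)
qed

end
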